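(* For every integer $n\ge0$ there are constants $C_n$ and $D_n$ (independent of $s$) such that for all real $s>-1$ \[ \int_0^1 P_{n,n}(x)x^s\,dx=C_n\frac{(-s)_n}{(\frac12+\frac s2)_{n+1}},\qquad \int_0^1\bigl[P_{n+1,n}(x)+P_{n,n+1}(x)\bigr]x^s\,dx=D_n\frac{(-s)_n}{(1+\frac s2)_{n+1}}. \]
   Context: Pochhammer symbol: $(a)_0=1$, $(a)_n=a(a+1)\cdots(a+n-1)$. Type II Legendre–Angelesco polynomials: for $n,m\ge0$, $P_{n,m}$ is the unique monic polynomial of degree $n+m$ with $\int_{-1}^0 P_{n,m}(x)x^k\,dx=0$ for $0\le k\le n-1$ and $\int_0^1 P_{n,m}(x)x^k\,dx=0$ for $0\le k\le m-1$. *)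

theory Defs
  imports "HOL-Analysis.Analysis" "HOL-Computational_Algebra.Polynomial"
begin

definition LA_poly :: "nat \<Rightarrow> nat \<Rightarrow> real poly" where
  "LA_poly n m = (THE p :: real poly.
      degree p = n + m \<and> lead_coeff p = 1 \<and>
      (\<forall>k<n. (LBINT x:{-1..0}. poly p x * x ^ k) = 0) \<and>
      (\<forall>k<m. (LBINT x:{0..1}. poly p x * x ^ k) = 0))"

end

theory Submission
  imports Defs "Jordan_Normal_Form.Determinant"
begin


definition mom :: "real \<Rightarrow> real \<Rightarrow> nat \<Rightarrow> real poly \<Rightarrow> real" where
  "mom a b k p = integral {a..b} (\<lambda>x. poly p x * x ^ k)"

lemma cont_pk: "continuous_on S (\<lambda>x. poly p x * x ^ k :: real)"
  by (intro continuous_intros)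

lemma int_pk: "(\<lambda>x. poly p x * x ^ k :: real) integrable_on {a..b}"
  by (intro integrable_continuous_interval cont_pk)

lemma LB_mom: "(LBINT x:{a..b}. poly p x * x ^ k) = mom a b k p"
  unfolding mom_def
  by (intro set_borel_integral_eq_integral(2) borel_integrable_atLeastAtMost' cont_pk)

lemma mom_add: "mom a b k (p + q) = mom a b k p + mom a b k q"
  unfolding mom_def by (simp add: distrib_right integral_add int_pk)

lemma mom_diff: "mom a b k (p - q) = mom a b k p - mom a b k q"
  unfolding mom_def by (simp add: left_diff_distrib integral_diff int_pk)

lemma mom_smult: "mom a b k (Polynomial.smult c p) = c * mom a b k p"
  unfolding mom_def by (simp add: mult.assoc)

lemma mom_sum: "finite I \<Longrightarrow> mom a b k (\<Sum>i\<in>I. f i) = (\<Sum>i\<in>I. mom a b k (f i))"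
  unfolding mom_def poly_sum sum_distrib_right
  by (rule integral_sum) (auto intro: int_pk)

lemma poly_as_sum: "poly w (x::real) = (\<Sum>i<Suc (degree w). coeff w i * x ^ i)"
  by (simp add: poly_altdef lessThan_Suc_atMost)

lemma mom_orth:
  assumes "\<forall>k<n. mom a b k p = 0" "degree w < n"
  shows "integral {a..b} (\<lambda>x. poly p x * poly w x) = 0"
proof -
  have "integral {a..b} (\<lambda>x. poly p x * poly w x)
      = integral {a..b} (\<lambda>x. \<Sum>i<Suc (degree w). coeff w i * (poly p x * x ^ i))"
    by (rule integral_cong) (simp add: poly_as_sum[of w] sum_distrib_left distrib_left mult_ac)
  also have "\<dots> = (\<Sum>i<Suc (degree w). coeff w i * mom a b i p)"
    unfolding mom_def by (subst integral_sum) (auto intro!: integrable_continuous_interval continuous_intros)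
  also have "\<dots> = 0" using assms by (intro sum.neutral) auto
  finally show ?thesis .
qed

lemma order_linear_eq: "order (z::real) [:-y, 1:] = (if z = y then 1 else (0::nat))"
proof (cases "z = y")
  case True thus ?thesis using order_power_n_n[of y 1] by simp
next
  case False
  hence "poly [:-y,1:] z \<noteq> (0::real)" by simp
  thus ?thesis using False order_root[of "[:-y,1:]" z] by auto
qed

lemma order_prod_lin:
  fixes Z :: "real set"
  assumes "finite Z"
  shows "order z (\<Prod>y\<in>Z. [:-y, 1:]) = (if z \<in> Z then 1 else (0::nat))"
  using assms
proof (induction Z rule: finite_induct)
  case empty
  then show ?case using order_root[of 1 z] by simp
next
  case (insert y Z)
  have ne: "(\<Prod>y\<in>Z. [:-y, 1::real:]) \<noteq> 0" by (simp add: insert)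
  have e: "(\<Prod>y\<in>insert y Z. [:-y, 1::real:]) = [:-y,1:] * (\<Prod>y\<in>Z. [:-y, 1:])"
    by (rule prod.insert[OF insert.hyps(1,2)])
  have "order z (\<Prod>y\<in>insert y Z. [:-y, 1:]) = order z [:-y,1:] + order z (\<Prod>y\<in>Z. [:-y, 1:])"
    unfolding e
  proof (rule order_mult)
    show "[:-y,1:] * (\<Prod>y\<in>Z. [:- y, 1:]) \<noteq> 0" using ne by (simp only: mult_eq_0_iff) simp
  qed
  then show ?case using insert by (auto simp: order_linear_eq)
qed

lemma sign_const:
  fixes g :: "real poly"
  assumes "g \<noteq> 0" "\<And>z. a < z \<Longrightarrow> z < b \<Longrightarrow> even (order z g)"
  shows "(\<forall>x. a < x \<and> x < b \<longrightarrow> poly g x \<ge> 0) \<or> (\<forall>x. a < x \<and> x < b \<longrightarrow> poly g x \<le> 0)"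
  using assms
proof (induction "degree g" arbitrary: g rule: less_induct)
  case less
  show ?case
  proof (cases "\<exists>z. a < z \<and> z < b \<and> poly g z = 0")
    case False
    show ?thesis
    proof (rule ccontr)
      assume "\<not> ?thesis"
      then obtain x y where xy: "a < x" "x < b" "poly g x < 0" "a < y" "y < b" "poly g y > 0"
        by force
      show False
      proof (cases "x < y")
        case True
        from poly_IVT_pos[OF True xy(3) xy(6)] False xy show False by force
      next
        case f: False
        hence "y < x" using xy by (cases "x = y") auto
        from poly_IVT_neg[OF this xy(6) xy(3)] False xy show False by force
      qed
    qed
  next
    case True
    then obtain z where z: "a < z" "z < b" "poly g z = 0" by blast
    have "order z g \<noteq> 0" using z less.prems order_root by blast
    with less.prems(2)[OF z(1,2)] have o2: "2 \<le> order z g" by presburger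
    hence "[:-z,1:]^2 dvd g" using order_divides by blast
    then obtain h where h: "g = [:-z,1:]^2 * h" by (elim dvdE)
    have hne: "h \<noteq> 0" using h less.prems by auto
    have dg: "degree g = 2 + degree h"
      using h hne by (simp add: degree_mult_eq degree_power_eq)
    have ev: "even (order w h)" if "a < w" "w < b" for w
    proof -
      have "order w g = order w ([:-z,1:]^2) + order w h"
        using h less.prems(1) by (simp add: order_mult)
      moreover have "order w ([:-z,1:]^2) = (if w = z then 2 else 0)"
        using order_power_n_n[of z 2] order_root[of "[:-z,1:]^2" w] by auto
      ultimately show ?thesis using less.prems(2)[OF that] by (auto split: if_splits)
    qed
    have IH: "(\<forall>x. a < x \<and> x < b \<longrightarrow> poly h x \<ge> 0) \<or> (\<forall>x. a < x \<and> x < b \<longrightarrow> poly h x \<le> 0)"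
      using less.hyps[of h] dg hne ev by auto
    have pg: "poly g x = (x - z)^2 * poly h x" for x
      using h by (simp add: power2_eq_square algebra_simps)
    show ?thesis
      using IH unfolding pg
      by (metis mult_nonneg_nonneg mult_nonneg_nonpos zero_le_power2)
  qed
qed




lemma zero_on_interval:
  fixes g :: "real poly"
  assumes "a < b" "\<forall>x. a < x \<and> x < b \<longrightarrow> 0 \<le> f x" "integral {a..b} f = 0"
    and f: "\<And>x. f x = c * poly g x" and c: "c \<noteq> 0"
  shows "g = 0"
proof (rule ccontr)
  assume gne: "g \<noteq> 0"
  have cf: "continuous_on {a..b} f" unfolding f[abs_def] by (intro continuous_intros)
  have hi: "(f has_integral 0) (cbox a b)"
    using assms(3) integrable_integral[OF integrable_continuous_interval[OF cf]] by simp
  have "f x = 0" if "x \<in> {a..b}" for x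
  proof (rule has_integral_0_cbox_imp_0[of a b f x])
    show "continuous_on (cbox a b) f" using cf by simp
    show "\<And>x. x \<in> box a b \<Longrightarrow> 0 \<le> f x" using assms(2) by (simp add: box_real)
    show "(f has_integral 0) (cbox a b)" by (rule hi)
    show "box a b \<noteq> {}" using assms(1) by simp
    show "x \<in> cbox a b" using that by simp
  qed
  hence "{a..b} \<subseteq> {x. poly g x = 0}" using c f by auto
  moreover have "finite {x. poly g x = 0}" by (rule poly_roots_finite[OF gne])
  ultimately have "finite {a..b}" by (rule finite_subset)
  with infinite_Icc[OF assms(1)] show False by simp
qed

lemma orth_count:
  fixes p :: "real poly"
  assumes pne: "p \<noteq> 0" and ab: "a < b" and orth: "\<forall>k<n. mom a b k p = 0"
  shows "n \<le> card {z. a < z \<and> z < b \<and> odd (order z p)}"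
proof (rule ccontr)
  define Z where "Z = {z. a < z \<and> z < b \<and> odd (order z p)}"
  have "Z \<subseteq> {z. poly p z = 0}" unfolding Z_def using order_root by fastforce
  hence fin: "finite Z" using poly_roots_finite[OF pne] finite_subset by blast
  assume "\<not> n \<le> card {z. a < z \<and> z < b \<and> odd (order z p)}"
  hence lt: "card Z < n" unfolding Z_def by simp
  define w where "w = (\<Prod>y\<in>Z. [:-y,1::real:])"
  have wne: "w \<noteq> 0" unfolding w_def using fin by simp
  have dw: "degree w = card Z" unfolding w_def
    by (subst degree_prod_eq_sum_degree) auto
  define g where "g = p * w"
  have gne: "g \<noteq> 0" unfolding g_def using pne wne by simp
  have int0: "integral {a..b} (\<lambda>x. poly g x) = 0"
    unfolding g_def poly_mult using mom_orth[OF orth] dw lt by simp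
  have ev: "even (order z g)" if "a < z" "z < b" for z
  proof -
    have "order z g = order z p + order z w" unfolding g_def using gne g_def order_mult by blast
    moreover have "order z w = (if z \<in> Z then 1 else 0)" unfolding w_def using order_prod_lin[OF fin] by simp
    ultimately show ?thesis using that unfolding Z_def by auto
  qed
  from sign_const[OF gne ev] show False
  proof
    assume "\<forall>x. a < x \<and> x < b \<longrightarrow> 0 \<le> poly g x"
    have "g = 0" by (rule zero_on_interval[where f="\<lambda>x. poly g x" and c=1 and g=g, OF ab \<open>\<forall>x. a < x \<and> x < b \<longrightarrow> 0 \<le> poly g x\<close> int0]) auto
    with gne show False by simp
  next
    assume h: "\<forall>x. a < x \<and> x < b \<longrightarrow> poly g x \<le> 0"
    have i2: "integral {a..b} (\<lambda>x. - poly g x) = 0" using int0 by simp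
    have "g = 0" by (rule zero_on_interval[where f="\<lambda>x. - poly g x" and c="-1" and g=g, OF ab _ i2]) (use h in auto)
    with gne show False by simp
  qed
qed

lemma uniq0:
  fixes r :: "real poly"
  assumes "degree r < n + m"
    and o1: "\<forall>k<n. mom (-1) 0 k r = 0" and o2: "\<forall>k<m. mom 0 1 k r = 0"
  shows "r = 0"
proof (rule ccontr)
  assume rne: "r \<noteq> 0"
  define Z1 where "Z1 = {z. -1 < z \<and> z < 0 \<and> odd (order z r)}"
  define Z2 where "Z2 = {z. 0 < z \<and> z < 1 \<and> odd (order z r)}"
  have c1: "n \<le> card Z1" unfolding Z1_def using orth_count[OF rne _ o1] by simp
  have c2: "m \<le> card Z2" unfolding Z2_def using orth_count[OF rne _ o2] by simp
  have sub: "Z1 \<union> Z2 \<subseteq> {z. poly r z = 0}" unfolding Z1_def Z2_def using order_root by fastforce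
  have fin: "finite {z. poly r z = 0}" by (rule poly_roots_finite[OF rne])
  have e: "card (Z1 \<union> Z2) = card Z1 + card Z2"
  proof (rule card_Un_disjoint)
    show "finite Z1" by (rule finite_subset[OF _ fin]) (use sub in blast)
    show "finite Z2" by (rule finite_subset[OF _ fin]) (use sub in blast)
    show "Z1 \<inter> Z2 = {}" unfolding Z1_def Z2_def by auto
  qed
  have "card (Z1 \<union> Z2) \<le> card {z. poly r z = 0}" using card_mono[OF fin sub] by simp
  also have "\<dots> \<le> degree r" by (rule card_poly_roots_bound[OF rne])
  finally show False using e c1 c2 assms(1) by simp
qed




lemma square_solve:
  fixes A :: "nat \<Rightarrow> nat \<Rightarrow> real" and b :: "nat \<Rightarrow> real"
  assumes inj: "\<And>c. (\<forall>r<N. (\<Sum>i<N. A r i * c i) = 0) \<Longrightarrow> \<forall>i<N. c i = 0"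
  shows "\<exists>c. \<forall>r<N. (\<Sum>i<N. A r i * c i) = b r"
proof -
  define M where "M = mat N N (\<lambda>(r,i). A r i)"
  have M: "M \<in> carrier_mat N N" unfolding M_def by simp
  have mv: "(M *\<^sub>v v) $ r = (\<Sum>i<N. A r i * v $ i)" if "r < N" "v \<in> carrier_vec N" for r v
    using that unfolding M_def
    by (auto simp: scalar_prod_def row_def lessThan_atLeast0 intro!: sum.cong)
  have "Determinant.det M \<noteq> 0"
  proof
    assume "Determinant.det M = 0"
    then obtain v where v: "v \<in> carrier_vec N" "v \<noteq> 0\<^sub>v N" "M *\<^sub>v v = 0\<^sub>v N"
      using det_0_iff_vec_prod_zero[OF M] by blast
    have "\<forall>r<N. (\<Sum>i<N. A r i * v $ i) = 0"
    proof (intro allI impI)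
      fix r assume r: "r < N"
      have "(M *\<^sub>v v) $ r = 0" using v(3) r by simp
      thus "(\<Sum>i<N. A r i * v $ i) = 0" using mv[OF r v(1)] by simp
    qed
    from inj[OF this] have "v = 0\<^sub>v N" using v(1) by (intro eq_vecI) auto
    with v(2) show False by simp
  qed
  from det_non_zero_imp_unit[OF M this, of undefined]
  obtain B where B: "B \<in> carrier_mat N N" "M * B = 1\<^sub>m N"
    unfolding Units_def ring_mat_def by auto
  define v where "v = B *\<^sub>v vec N b"
  have vc: "v \<in> carrier_vec N" unfolding v_def using B by simp
  have "M *\<^sub>v v = vec N b"
    unfolding v_def using B M by (simp flip: assoc_mult_mat_vec)
  hence "\<forall>r<N. (\<Sum>i<N. A r i * v $ i) = b r"
    using mv[OF _ vc] by (metis index_vec)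
  thus ?thesis by blast
qed



lemma mom_monom: "mom a b k (monom c i) = c * mom a b k (monom 1 i)"
  by (metis mom_smult mult.right_neutral smult_monom)

lemma mom_sum_monom: "mom a b k (\<Sum>i<N. monom (c i) i) = (\<Sum>i<N. c i * mom a b k (monom 1 i))"
  unfolding mom_sum[OF finite_lessThan] by (intro sum.cong refl mom_monom)

lemma coeff_sum_monom: "coeff (\<Sum>i<N. monom (c i) i) j = (if j < N then c j else 0)"
  by (simp add: coeff_sum coeff_monom)

lemma degree_sum_monom: "N > 0 \<Longrightarrow> degree (\<Sum>i<N. monom (c i) i) < N"
proof -
  assume N: "N > 0"
  have "degree (\<Sum>i<N. monom (c i) i) \<le> N - 1"
    by (rule degree_le) (use N in \<open>auto simp: coeff_sum_monom\<close>)
  thus ?thesis using N by linarith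
qed

definition isLA :: "nat \<Rightarrow> nat \<Rightarrow> real poly \<Rightarrow> bool" where
  "isLA n m p \<longleftrightarrow> degree p = n + m \<and> lead_coeff p = 1 \<and>
     (\<forall>k<n. mom (-1) 0 k p = 0) \<and> (\<forall>k<m. mom 0 1 k p = 0)"

lemma exist_LA: "\<exists>p. isLA n m p"
proof -
  define N where "N = n + m"
  define L where "L r q = (if r < n then mom (-1) 0 r q else mom 0 1 (r - n) q)" for r q
  define A where "A r i = L r (monom 1 i)" for r i
  define b where "b r = - L r (monom 1 N)" for r
  have Ladd: "L r (p + q) = L r p + L r q" for r p q unfolding L_def by (simp add: mom_add)
  have Lsum: "L r (\<Sum>i<N. monom (c i) i) = (\<Sum>i<N. A r i * c i)" for r c
    unfolding L_def A_def by (simp add: mom_sum_monom mult.commute)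
  have inj: "\<forall>i<N. c i = 0" if h: "\<forall>r<N. (\<Sum>i<N. A r i * c i) = 0" for c
  proof (cases "N = 0")
    case True thus ?thesis by simp
  next
    case False
    define q where "q = (\<Sum>i<N. monom (c i) i)"
    have dq: "degree q < n + m" unfolding q_def N_def[symmetric] using False degree_sum_monom by simp
    have o1: "\<forall>k<n. mom (-1) 0 k q = 0"
    proof (intro allI impI)
      fix k assume k: "k < n"
      have "L k q = 0" unfolding q_def Lsum using h k N_def by simp
      thus "mom (-1) 0 k q = 0" using k unfolding L_def by simp
    qed
    have o2: "\<forall>k<m. mom 0 1 k q = 0"
    proof (intro allI impI)
      fix k assume k: "k < m"
      have "L (n + k) q = 0" unfolding q_def Lsum using h k N_def by simp
      thus "mom 0 1 k q = 0" using k unfolding L_def by simp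
    qed
    have "q = 0" by (rule uniq0[OF dq o1 o2])
    thus ?thesis using coeff_sum_monom[where N=N and c=c] unfolding q_def by (metis coeff_0)
  qed
  obtain c where c: "\<forall>r<N. (\<Sum>i<N. A r i * c i) = b r"
    using square_solve[where N=N and A=A and b=b] inj by blast
  define q where "q = (\<Sum>i<N. monom (c i) i)"
  define p where "p = monom 1 N + q"
  have cq: "coeff q N = 0" unfolding q_def coeff_sum_monom by simp
  have dq: "degree q < degree (monom (1::real) N) \<or> q = 0"
    using degree_sum_monom[where N=N and c=c] unfolding q_def by (cases "N = 0") (auto simp: degree_monom_eq)
  have dp: "degree p = N"
    using dq unfolding p_def by (auto simp: degree_add_eq_left degree_monom_eq)
  have lp: "lead_coeff p = 1" using dp cq unfolding p_def by simp
  have Lp: "L r p = 0" if "r < N" for r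
    unfolding p_def Ladd q_def Lsum using c that b_def by simp
  have "isLA n m p"
    unfolding isLA_def
  proof (intro conjI allI impI)
    show "degree p = n + m" using dp N_def by simp
    show "lead_coeff p = 1" by (rule lp)
    fix k
    show "mom (-1) 0 k p = 0" if "k < n" using Lp[of k] that N_def unfolding L_def by simp
    show "mom 0 1 k p = 0" if "k < m" using Lp[of "n + k"] that N_def unfolding L_def by simp
  qed
  thus ?thesis by blast
qed

lemma LA_uniq: assumes "isLA n m p" "isLA n m q" shows "p = q"
proof (rule ccontr)
  assume ne: "p \<noteq> q"
  define r where "r = p - q"
  have rne: "r \<noteq> 0" using ne unfolding r_def by simp
  have d: "degree r \<le> n + m" unfolding r_def using assms unfolding isLA_def
    by (intro degree_diff_le) auto
  have c1: "coeff p (n + m) = 1" using assms(1) unfolding isLA_def by (metis)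
  have c2: "coeff q (n + m) = 1" using assms(2) unfolding isLA_def by (metis)
  have "coeff r (n + m) = 0" unfolding r_def using c1 c2 by (simp add: coeff_diff)
  hence "degree r \<noteq> n + m" using rne leading_coeff_neq_0 by metis
  hence "degree r < n + m" using d by simp
  moreover have "\<forall>k<n. mom (-1) 0 k r = 0" "\<forall>k<m. mom 0 1 k r = 0"
    unfolding r_def mom_diff using assms unfolding isLA_def by auto
  ultimately have "r = 0" by (intro uniq0)
  with rne show False by simp
qed

lemma LA_poly_alt: "LA_poly n m = (THE p. isLA n m p)"
  unfolding LA_poly_def isLA_def LB_mom by simp

lemma LA_isLA: "isLA n m (LA_poly n m)"
proof -
  have "\<exists>!p. isLA n m p" using exist_LA LA_uniq by blast
  thus ?thesis unfolding LA_poly_alt by (rule theI')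
qed

lemma LA_eq: "isLA n m p \<Longrightarrow> LA_poly n m = p"
  using LA_isLA LA_uniq by blast




lemma coeff_pcomp_lin: "coeff (p \<circ>\<^sub>p [:0, c:]) i = c ^ i * coeff p (i::nat)" for p :: "real poly"
proof (induction p arbitrary: i rule: pCons_induct)
  case 0
  then show ?case by simp
next
  case (pCons a p)
  have e: "[:0, c:] * (p \<circ>\<^sub>p [:0, c:]) = pCons 0 (Polynomial.smult c (p \<circ>\<^sub>p [:0, c:]))"
    by simp
  show ?case
    by (cases i) (simp_all add: pcompose_pCons e pCons.IH)
qed

abbreviation R :: "real poly \<Rightarrow> real poly" where "R p \<equiv> p \<circ>\<^sub>p [:0, -1:]"

lemma neg_pow_aux: "(-x)^k * (-1)^k = (x::real)^k"
proof -
  have a: "(-x)^k = (-1)^k * x^k" by (rule power_minus)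
  have b: "((-1::real)^k) * (-1)^k = 1"
    by (metis power_mult_distrib mult_minus1 power_one minus_minus)
  show ?thesis unfolding a using b by (metis mult.commute mult.left_commute mult_1)
qed

lemma mom_refl_gen: "mom (-b) (-a) k (R p) = (-1)^k * mom a b k p"
proof -
  define h where "h y = poly p y * y^k * (-1)^k" for y :: real
  have "(\<lambda>x. poly (R p) x * x^k) = (\<lambda>x. h (-x))"
    by (rule ext) (simp add: h_def poly_pcompose mult.assoc neg_pow_aux)
  hence "mom (-b) (-a) k (R p) = integral {-b..-a} (\<lambda>x. h (-x))" unfolding mom_def by simp
  also have "\<dots> = integral {a..b} h" by (rule Henstock_Kurzweil_Integration.integral_reflect_real)
  also have "\<dots> = (-1)^k * mom a b k p" unfolding h_def mom_def by (simp add: mult.commute)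
  finally show ?thesis .
qed

lemma mom_refl1: "mom (-1) 0 k (R p) = (-1)^k * mom 0 1 k p"
  using mom_refl_gen[of 1 0 k p] by simp

lemma mom_refl2: "mom 0 1 k (R p) = (-1)^k * mom (-1) 0 k p"
  using mom_refl_gen[of 0 "-1" k p] by simp

lemma mom_minus: "mom a b k (- p) = - mom a b k p"
  using mom_smult[of a b k "-1" p] by simp

lemma degree_R: "degree (R p) = degree p"
  by (simp add: degree_pcompose)

lemma lead_R: "lead_coeff (R p) = (-1)^degree p * lead_coeff p"
  by (simp add: degree_R coeff_pcomp_lin)

lemma LA_even: "odd i \<Longrightarrow> coeff (LA_poly n n) i = 0"
proof -
  assume i: "odd i"
  define p where "p = LA_poly n n"
  have P: "isLA n n p" unfolding p_def by (rule LA_isLA)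
  have dp: "degree p = n + n" and lp: "lead_coeff p = 1"
    and m1: "\<forall>k<n. mom (-1) 0 k p = 0" and m2: "\<forall>k<n. mom 0 1 k p = 0"
    using P unfolding isLA_def by auto
  have ev: "even (n + n)" by simp
  have "isLA n n (R p)" unfolding isLA_def
  proof (intro conjI allI impI)
    show "degree (R p) = n + n" using dp degree_R by simp
    have "lead_coeff (R p) = (-1)^(n+n) * lead_coeff p" using lead_R[of p] dp by simp
    thus "lead_coeff (R p) = 1" using lp ev by simp
    fix k
    show "mom (-1) 0 k (R p) = 0" if "k < n" using m2 that by (simp add: mom_refl1)
    show "mom 0 1 k (R p) = 0" if "k < n" using m1 that by (simp add: mom_refl2)
  qed
  hence e: "R p = p" using LA_uniq P by blast
  have "coeff (R p) i = (-1)^i * coeff p i" by (rule coeff_pcomp_lin)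
  hence "coeff p i = (-1)^i * coeff p i" unfolding e .
  thus ?thesis using i unfolding p_def by simp
qed

lemma LA_odd: "even i \<Longrightarrow> coeff (LA_poly (n+1) n + LA_poly n (n+1)) i = 0"
proof -
  assume i: "even i"
  define p where "p = LA_poly (n+1) n"
  have P: "isLA (n+1) n p" unfolding p_def by (rule LA_isLA)
  have dp: "degree p = n + 1 + n" and lp: "lead_coeff p = 1"
    and m1: "\<forall>k<n+1. mom (-1) 0 k p = 0" and m2: "\<forall>k<n. mom 0 1 k p = 0"
    using P unfolding isLA_def by auto
  have od: "odd (n + 1 + n)" by simp
  have "isLA n (n+1) (Polynomial.smult (-1) (R p))" unfolding isLA_def
  proof (intro conjI allI impI)
    show "degree (Polynomial.smult (-1) (R p)) = n + (n + 1)" using dp degree_R by simp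
    have "lead_coeff (R p) = (-1)^(n+1+n) * lead_coeff p" using lead_R[of p] dp by simp
    hence "lead_coeff (R p) = -1" using lp od by simp
    thus "lead_coeff (Polynomial.smult (-1) (R p)) = 1" by simp
    fix k
    show "mom (-1) 0 k (Polynomial.smult (-1) (R p)) = 0" if "k < n" using m2 that by (simp add: mom_refl1 mom_minus)
    show "mom 0 1 k (Polynomial.smult (-1) (R p)) = 0" if "k < n + 1" using m1 that by (simp add: mom_refl2 mom_minus)
  qed
  hence q: "LA_poly n (n+1) = Polynomial.smult (-1) (R p)" by (rule LA_eq)
  have "coeff (R p) i = (-1)^i * coeff p i" by (rule coeff_pcomp_lin)
  hence "coeff (R p) i = coeff p i" using i by simp
  thus ?thesis unfolding q p_def[symmetric] by simp
qed




lemma ratfun: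
  fixes a :: "nat \<Rightarrow> real" and e :: real
  assumes e: "e \<ge> 1"
    and van: "\<And>k. k < n \<Longrightarrow> (\<Sum>j=0..n. a j / (real k + 2 * real j + e)) = 0"
  shows "\<exists>C. \<forall>s>-1. (\<Sum>j=0..n. a j / (s + 2 * real j + e))
           = C * pochhammer (-s) n / pochhammer (e/2 + s/2) (Suc n)"
proof -
  define D where "D j = [:2 * real j + e, 1:]" for j
  define P where "P j = (\<Prod>i\<in>{0..n}-{j}. D i)" for j
  define G where "G = (\<Sum>j=0..n. Polynomial.smult (a j) (P j))"
  define Q where "Q = (\<Prod>k<n. [:- real k, 1:])"
  have polyD: "poly (D j) s = s + 2 * real j + e" for j s unfolding D_def by simp
  define Den where "Den s = (\<Prod>i=0..n. s + 2 * real i + e)" for s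
  have key: "(\<Sum>j=0..n. a j / (s + 2 * real j + e)) = poly G s / Den s" if s: "s > -1" for s
  proof -
    have nz: "s + 2 * real i + e \<noteq> 0" for i using s e by (smt (verit) of_nat_0_le_iff)
    have "poly G s = (\<Sum>j=0..n. a j * (\<Prod>i\<in>{0..n}-{j}. s + 2 * real i + e))"
      unfolding G_def P_def by (simp add: poly_sum poly_prod polyD)
    moreover have "a j / (s + 2 * real j + e) = a j * (\<Prod>i\<in>{0..n}-{j}. s + 2 * real i + e) / Den s"
      if j: "j \<in> {0..n}" for j
    proof -
      have "Den s = (s + 2 * real j + e) * (\<Prod>i\<in>{0..n}-{j}. s + 2 * real i + e)"
        unfolding Den_def using j by (subst prod.remove[of _ j]) auto
      moreover have "(\<Prod>i\<in>{0..n}-{j}. s + 2 * real i + e) \<noteq> 0" using nz by simp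
      ultimately show ?thesis by (simp add: mult_divide_mult_cancel_right)
    qed
    ultimately show ?thesis by (simp add: sum_divide_distrib)
  qed
  have dG: "degree G \<le> n"
    unfolding G_def
  proof (rule degree_sum_le)
    fix j assume j: "j \<in> {0..n}"
    have "degree (P j) \<le> sum (degree \<circ> D) ({0..n}-{j})" unfolding P_def by (rule degree_prod_sum_le) simp
    also have "\<dots> = card ({0..n}-{j})" by (simp add: D_def)
    also have "\<dots> = n" using j by simp
    finally show "degree (Polynomial.smult (a j) (P j)) \<le> n" by (meson degree_smult_le le_trans)
  qed simp
  have dQ: "degree Q = n" unfolding Q_def by (subst degree_prod_eq_sum_degree) auto
  have "lead_coeff Q = 1" unfolding Q_def by (simp add: lead_coeff_prod)
  hence lQ: "coeff Q n = 1" using dQ by simp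
  define c where "c = coeff G n"
  define H where "H = G - Polynomial.smult c Q"
  have H0: "H = 0"
  proof (rule ccontr)
    assume Hne: "H \<noteq> 0"
    have "degree H \<le> n" unfolding H_def using dG dQ by (intro degree_diff_le) auto
    moreover have "coeff H n = 0" unfolding H_def c_def using lQ by simp
    ultimately have dH: "degree H < n" using Hne leading_coeff_neq_0 le_neq_implies_less by metis
    have roots: "real ` {..<n} \<subseteq> {x. poly H x = 0}"
    proof
      fix x assume "x \<in> real ` {..<n}"
      then obtain k where k: "k < n" "x = real k" by auto
      have "poly Q x = 0" unfolding Q_def poly_prod using k by (intro prod_zero) auto
      moreover have "poly G x = 0"
      proof -
        have "poly G x / Den x = 0" using key[of x] van[OF k(1)] k by simp
        moreover have "Den x \<noteq> 0"
        proof -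
          have "x + 2 * real i + e \<noteq> 0" for i using k e by (smt (verit) of_nat_0_le_iff)
          thus ?thesis unfolding Den_def by (simp add: prod_zero_iff)
        qed
        ultimately show ?thesis by simp
      qed
      ultimately show "x \<in> {x. poly H x = 0}" unfolding H_def by simp
    qed
    have "n = card (real ` {..<n})" by (simp add: card_image)
    also have "\<dots> \<le> card {x. poly H x = 0}" by (rule card_mono[OF poly_roots_finite[OF Hne] roots])
    also have "\<dots> \<le> degree H" by (rule card_poly_roots_bound[OF Hne])
    finally show False using dH by simp
  qed
  hence GQ: "G = Polynomial.smult c Q" unfolding H_def by simp
  have pQ: "poly Q s = (-1)^n * pochhammer (-s) n" for s
  proof -
    have "pochhammer (-s) n = (\<Prod>k<n. -(s - real k))" by (simp add: pochhammer_prod atLeast0LessThan)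
    also have "\<dots> = (-1)^n * (\<Prod>k<n. s - real k)" by (subst prod_uminus) simp
    finally show ?thesis unfolding Q_def poly_prod by simp
  qed
  have pDen: "Den s = 2^(Suc n) * pochhammer (e/2 + s/2) (Suc n)" for s
  proof -
    have "pochhammer (e/2 + s/2) (Suc n) = (\<Prod>i=0..n. (s + 2 * real i + e) / 2)"
      by (simp add: pochhammer_Suc_prod field_simps)
    also have "\<dots> = Den s / 2^(Suc n)" unfolding Den_def by (simp add: prod_dividef)
    finally show ?thesis by simp
  qed
  show ?thesis
  proof (intro exI allI impI)
    fix s :: real assume s: "s > -1"
    show "(\<Sum>j=0..n. a j / (s + 2 * real j + e)) = (c * (-1)^n / 2^(Suc n)) * pochhammer (-s) n / pochhammer (e/2 + s/2) (Suc n)"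
      unfolding key[OF s] GQ poly_smult pQ pDen by (simp add: field_simps)
  qed
qed




lemma poly_sumM: "degree p < M \<Longrightarrow> poly p (x::real) = (\<Sum>i<M. coeff p i * x^i)"
proof -
  assume M: "degree p < M"
  have "poly p x = (\<Sum>i<Suc (degree p). coeff p i * x^i)" by (rule poly_as_sum)
  also have "\<dots> = (\<Sum>i<M. coeff p i * x^i)"
    by (rule sum.mono_neutral_left) (use M in \<open>auto simp: coeff_eq_0\<close>)
  finally show ?thesis .
qed

lemma powr_hasint: "t > -1 \<Longrightarrow> ((\<lambda>x. x powr t) has_integral 1/(t+1)) {0..1::real}"
  using has_integral_powr_from_0[of t 1] by simp

lemma powr_absint: "t > -1 \<Longrightarrow> (\<lambda>x. x powr t) absolutely_integrable_on {0..1::real}"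
  by (rule nonnegative_absolutely_integrable_1) (use powr_hasint in \<open>auto simp: has_integral_integrable\<close>)

lemma term_eq: "x \<ge> 0 \<Longrightarrow> (x::real)^i * x powr s = x powr (s + real i)"
proof (cases "x = 0")
  case True thus ?thesis by simp
next
  case False
  assume "x \<ge> 0"
  hence "x > 0" using False by simp
  thus ?thesis by (simp add: powr_add powr_realpow)
qed

lemma hk_int:
  fixes s :: real
  assumes s: "s > -1" and M: "degree p < M"
  shows "((\<lambda>x. poly p x * x powr s) has_integral (\<Sum>i<M. coeff p i / (s + real i + 1))) {0..1}"
    and "(\<lambda>x. poly p x * x powr s) absolutely_integrable_on {0..1}"
proof -
  define g where "g x = (\<Sum>i<M. coeff p i * x powr (s + real i))" for x :: real
  have eq: "poly p x * x powr s = g x" if "x \<in> {0..1}" for x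
    unfolding g_def poly_sumM[OF M] sum_distrib_right
    using that by (intro sum.cong refl) (simp add: mult.assoc term_eq)
  have "(g has_integral (\<Sum>i<M. coeff p i * (1 / (s + real i + 1)))) {0..1}"
    unfolding g_def
    by (intro has_integral_sum finite_lessThan has_integral_mult_right)
       (rule powr_hasint, insert s, simp)
  thus "((\<lambda>x. poly p x * x powr s) has_integral (\<Sum>i<M. coeff p i / (s + real i + 1))) {0..1}"
    using eq by (subst has_integral_cong[of _ _ g]) auto
  have "g absolutely_integrable_on {0..1}"
    unfolding g_def
    by (intro absolutely_integrable_sum finite_lessThan set_integrable_mult_right powr_absint) (use s in auto)
  thus "(\<lambda>x. poly p x * x powr s) absolutely_integrable_on {0..1}"
    using eq set_integrable_cong[of lebesgue lebesgue "{0..1::real}" "{0..1}" "\<lambda>x. poly p x * x powr s" g] by auto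
qed

lemma LB_int:
  fixes s :: real
  assumes s: "s > -1" and M: "degree p < M"
  shows "(LBINT x:{0..1}. poly p x * x powr s) = (\<Sum>i<M. coeff p i / (s + real i + 1))"
proof -
  let ?f = "\<lambda>x. poly p x * x powr s"
  have L: "borel_measurable lborel = borel_measurable (borel::real measure)"
    by (rule measurable_cong_sets) simp_all
  have m1: "poly p \<in> borel_measurable lborel" unfolding L
    by (rule borel_measurable_continuous_onI) (intro continuous_intros)
  have m0: "(\<lambda>x::real. x) \<in> borel_measurable lborel" unfolding L
    by (rule borel_measurable_continuous_onI) (intro continuous_intros)
  have m2: "(\<lambda>x::real. x powr s) \<in> borel_measurable lborel"
    by (rule powr_real_measurable[OF m0]) simp
  have meas: "(\<lambda>x. indicator {0..1} x *\<^sub>R ?f x) \<in> borel_measurable lborel"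
    by (intro borel_measurable_scaleR borel_measurable_indicator borel_measurable_times m1 m2) simp
  have "set_integrable lborel {0..1} ?f"
    using hk_int(2)[OF s M] unfolding set_integrable_def using integrable_completion[OF meas] by simp
  hence "(LBINT x:{0..1}. ?f x) = integral {0..1} ?f" by (rule set_borel_integral_eq_integral(2))
  also have "\<dots> = (\<Sum>i<M. coeff p i / (s + real i + 1))" using hk_int(1)[OF s M] by (rule integral_unique)
  finally show ?thesis .
qed

lemma mom_formula:
  assumes M: "degree p < M"
  shows "mom 0 1 k p = (\<Sum>i<M. coeff p i / (real k + real i + 1))"
proof -
  have "mom 0 1 k p = integral {0..1} (\<lambda>x. poly p x * x powr real k)"
    unfolding mom_def
    by (rule integral_spike[of "{0}"]) (auto simp: powr_realpow)
  also have "\<dots> = (\<Sum>i<M. coeff p i / (real k + real i + 1))"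
    using hk_int(1)[OF _ M, of "real k"] by (simp add: integral_unique)
  finally show ?thesis .
qed




lemma pairs: "(\<Sum>i<Suc (Suc (2*n)). f i) = (\<Sum>j=0..n. f (2*j) + f (Suc (2*j)))" for f :: "nat \<Rightarrow> real"
  unfolding lessThan_Suc_atMost sum.in_pairs_0 atLeast0AtMost ..

lemma trans_even:
  assumes "\<And>j. coeff p (Suc (2*j)) = 0"
  shows "(\<Sum>i<Suc (Suc (2*n)). coeff p i / (t + real i + 1)) = (\<Sum>j=0..n. coeff p (2*j) / (t + 2 * real j + 1))"
  unfolding pairs using assms by simp

lemma trans_odd:
  assumes "\<And>j. coeff p (2*j) = 0"
  shows "(\<Sum>i<Suc (Suc (2*n)). coeff p i / (t + real i + 1)) = (\<Sum>j=0..n. coeff p (Suc (2*j)) / (t + 2 * real j + 2))"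
  unfolding pairs using assms by (simp add: algebra_simps)

theorem mainTheorem10:
  fixes n :: nat
  shows "\<exists>C D :: real. \<forall>s :: real. s > -1 \<longrightarrow>
    (LBINT x:{0..1}. poly (LA_poly n n) x * x powr s)
        = C * pochhammer (-s) n / pochhammer (1/2 + s/2) (n + 1)
    \<and> (LBINT x:{0..1}. (poly (LA_poly (n+1) n) x + poly (LA_poly n (n+1)) x) * x powr s)
        = D * pochhammer (-s) n / pochhammer (1 + s/2) (n + 1)"
proof -
  define p where "p = LA_poly n n"
  define q where "q = LA_poly (n+1) n + LA_poly n (n+1)"
  define M where "M = Suc (Suc (2*n))"
  have P: "isLA n n p" unfolding p_def by (rule LA_isLA)
  have Q1: "isLA (n+1) n (LA_poly (n+1) n)" by (rule LA_isLA)
  have Q2: "isLA n (n+1) (LA_poly n (n+1))" by (rule LA_isLA)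
  have dp: "degree p < M" using P unfolding isLA_def M_def by simp
  have dq: "degree q < M"
  proof -
    have "degree q \<le> max (degree (LA_poly (n+1) n)) (degree (LA_poly n (n+1)))"
      unfolding q_def by (rule degree_add_le_max)
    thus ?thesis using Q1 Q2 unfolding isLA_def M_def by simp
  qed
  have pe: "coeff p (Suc (2*j)) = 0" for j unfolding p_def by (rule LA_even) simp
  have qo: "coeff q (2*j) = 0" for j unfolding q_def by (rule LA_odd) simp
  obtain C where C: "\<forall>s>-1. (\<Sum>j=0..n. coeff p (2*j) / (s + 2 * real j + 1))
           = C * pochhammer (-s) n / pochhammer (1/2 + s/2) (Suc n)"
  proof -
    have "\<exists>C. \<forall>s>-1. (\<Sum>j=0..n. coeff p (2*j) / (s + 2 * real j + 1))
           = C * pochhammer (-s) n / pochhammer (1/2 + s/2) (Suc n)"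
    proof (rule ratfun)
      fix k assume k: "k < n"
      have "mom 0 1 k p = 0" using P k unfolding isLA_def by auto
      thus "(\<Sum>j=0..n. coeff p (2*j) / (real k + 2 * real j + 1)) = 0"
        using mom_formula[OF dp, of k] trans_even[where p=p and n=n and t="real k", OF pe] unfolding M_def by simp
    qed simp
    thus ?thesis using that by blast
  qed
  obtain D where D: "\<forall>s>-1. (\<Sum>j=0..n. coeff q (Suc (2*j)) / (s + 2 * real j + 2))
           = D * pochhammer (-s) n / pochhammer (2/2 + s/2) (Suc n)"
  proof -
    have "\<exists>D. \<forall>s>-1. (\<Sum>j=0..n. coeff q (Suc (2*j)) / (s + 2 * real j + 2))
           = D * pochhammer (-s) n / pochhammer (2/2 + s/2) (Suc n)"
    proof (rule ratfun)
      fix k assume k: "k < n"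
      have "mom 0 1 k (LA_poly (n+1) n) = 0" "mom 0 1 k (LA_poly n (n+1)) = 0"
        using Q1 Q2 k unfolding isLA_def by auto
      hence "mom 0 1 k q = 0" unfolding q_def mom_add by simp
      thus "(\<Sum>j=0..n. coeff q (Suc (2*j)) / (real k + 2 * real j + 2)) = 0"
        using mom_formula[OF dq, of k] trans_odd[where p=q and n=n and t="real k", OF qo] unfolding M_def by simp
    qed simp
    thus ?thesis using that by blast
  qed
  show ?thesis
  proof (intro exI allI impI conjI)
    fix s :: real assume s: "s > -1"
    show "(LBINT x:{0..1}. poly (LA_poly n n) x * x powr s)
        = C * pochhammer (-s) n / pochhammer (1/2 + s/2) (n + 1)"
      using LB_int[OF s dp] trans_even[where p=p and n=n and t=s, OF pe] C s unfolding M_def p_def by simp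
    have e: "(\<lambda>x. (poly (LA_poly (n+1) n) x + poly (LA_poly n (n+1)) x) * x powr s)
           = (\<lambda>x. poly q x * x powr s)" unfolding q_def by simp
    show "(LBINT x:{0..1}. (poly (LA_poly (n+1) n) x + poly (LA_poly n (n+1)) x) * x powr s)
        = D * pochhammer (-s) n / pochhammer (1 + s/2) (n + 1)"
      unfolding e using LB_int[OF s dq] trans_odd[where p=q and n=n and t=s, OF qo] D s unfolding M_def by simp
  qed
qed


end
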